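(* Let $\mathcal{C}$ be a permutation class (resp. polyomino class) and let $\mathcal{M}$ be its canonical $m$-basis. The minimal $m$-bases of $\mathcal{C}$ are exactly the subsets $\mathcal{B}\subseteq\mathcal{M}$ that are minimal for inclusion among subsets satisfying $\mathcal{C}=Av_{\mathfrak{S}}(\mathcal{B})$ (resp. $\mathcal{C}=Av_{\mathfrak{P}}(\mathcal{B})$).
   Context: Binary matrices have entries in $\{0,1\}$; $M'\preccurlyeq M$ (submatrix order) means $M'$ is obtained from $M$ by deleting some rows and/or columns. A permutation $\sigma$ of $\{1,\dots,n\}$ is identified with its permutation matrix ($M_\sigma(i,j)=1$ iff $i=\sigma(j)$); a permutation class is a set of permutations closed under taking submatrices that are permutation matrices (i.e. under taking patterns). A quasi-permutation matrix is a binary matrix with at most one $1$ per row and per column. A polyomino is a finite edge-connected union of unit cells of $\mathbb{Z}^2$ up to translation, identified with the binary matrix of its minimal bounding rectangle ($1$ for cells, $0$ otherwise); a polyomino class is a set of polyominoes closed under taking submatrices that are polyominoes. $Av_{\mathfrak{S}}(\mathcal{M})$ (resp. $Av_{\mathfrak{P}}(\mathcal{M})$) denotes the set of permutations (resp. polyominoes) having no submatrix in $\mathcal{M}$. Write $Av$ for $Av_{\mathfrak{S}}$ (permutation case) or $Av_{\mathfrak{P}}$ (polyomino case). For a class $\mathcal{C}$, $\mathcal{C}^+$ is the set of binary matrices that are submatrices of some element of $\mathcal{C}$; the canonical $m$-basis of $\mathcal{C}$ is the set of $\preccurlyeq$-minimal quasi-permutation matrices (permutation case), resp. binary matrices (polyomino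 case), not in $\mathcal{C}^+$. An $m$-basis of $\mathcal{C}$ is an antichain $\mathcal{M}$ (for $\preccurlyeq$) of matrices with $\mathcal{C}=Av(\mathcal{M})$. A minimal $m$-basis of $\mathcal{C}$ is an $m$-basis $\mathcal{M}$ such that (1) no strict subset $\mathcal{M}'\subsetneq\mathcal{M}$ satisfies $\mathcal{C}=Av(\mathcal{M}')$, and (2) for every $M\in\mathcal{M}$ and every submatrix $M'\preccurlyeq M$, either $M'=M$ or $\mathcal{C}\neq Av\big((\mathcal{M}\setminus\{M\})\cup\{M'\}\big)$. *)

theory Defs
  imports Main
begin

text \<open>A binary matrix of size m x n is represented as a triple (m, n, S) where
  S is the set of (0-based) positions (row, column) holding a 1.\<close>
type_synonym bmat = "nat \<times> nat \<times> (nat \<times> nat) set"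

definition wf_mat :: "bmat \<Rightarrow> bool" where
  "wf_mat M \<longleftrightarrow> (case M of (m, n, S) \<Rightarrow> S \<subseteq> {..<m} \<times> {..<n})"

definition submat :: "bmat \<Rightarrow> bmat \<Rightarrow> bool" where
  "submat M' M \<longleftrightarrow> wf_mat M \<and>
     (case M' of (m', n', S') \<Rightarrow> case M of (m, n, S) \<Rightarrow>
       (\<exists>r c. strict_mono_on {..<m'} r \<and> (\<forall>i<m'. r i < m) \<and>
              strict_mono_on {..<n'} c \<and> (\<forall>j<n'. c j < n) \<and>
              S' = {(i, j). i < m' \<and> j < n' \<and> (r i, c j) \<in> S}))"

definition is_perm_mat :: "bmat \<Rightarrow> bool" where
  "is_perm_mat M \<longleftrightarrow> (\<exists>n \<sigma>. bij_betw \<sigma> {..<n} {..<n} \<and>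
      M = (n, n, {(\<sigma> j, j) | j. j < n}))"

definition is_quasi_perm :: "bmat \<Rightarrow> bool" where
  "is_quasi_perm M \<longleftrightarrow> wf_mat M \<and> (case M of (m, n, S) \<Rightarrow>
      (\<forall>i j j'. (i, j) \<in> S \<longrightarrow> (i, j') \<in> S \<longrightarrow> j = j') \<and>
      (\<forall>i i' j. (i, j) \<in> S \<longrightarrow> (i', j) \<in> S \<longrightarrow> i = i'))"

definition cell_adj :: "nat \<times> nat \<Rightarrow> nat \<times> nat \<Rightarrow> bool" where
  "cell_adj p q \<longleftrightarrow> (fst p = fst q \<and> (snd p = Suc (snd q) \<or> snd q = Suc (snd p))) \<or>
                     (snd p = snd q \<and> (fst p = Suc (fst q) \<or> fst q = Suc (fst p)))"

text \<open>A polyomino: nonempty, edge-connected set of cells, given by the binary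
  matrix of its minimal bounding rectangle (every row and column contains a cell).\<close>
definition is_polyomino :: "bmat \<Rightarrow> bool" where
  "is_polyomino M \<longleftrightarrow> wf_mat M \<and> (case M of (m, n, S) \<Rightarrow>
      S \<noteq> {} \<and>
      (\<forall>i<m. \<exists>j. (i, j) \<in> S) \<and> (\<forall>j<n. \<exists>i. (i, j) \<in> S) \<and>
      (\<forall>p\<in>S. \<forall>q\<in>S. (\<lambda>x y. x \<in> S \<and> y \<in> S \<and> cell_adj x y)\<^sup>*\<^sup>* p q))"

definition is_class :: "(bmat \<Rightarrow> bool) \<Rightarrow> bmat set \<Rightarrow> bool" where
  "is_class P C \<longleftrightarrow> (\<forall>M\<in>C. P M) \<and> (\<forall>M\<in>C. \<forall>M'. submat M' M \<and> P M' \<longrightarrow> M' \<in> C)"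

definition perm_class :: "bmat set \<Rightarrow> bool" where
  "perm_class C \<longleftrightarrow> is_class is_perm_mat C"

definition polyomino_class :: "bmat set \<Rightarrow> bool" where
  "polyomino_class C \<longleftrightarrow> is_class is_polyomino C"

definition Av :: "(bmat \<Rightarrow> bool) \<Rightarrow> bmat set \<Rightarrow> bmat set" where
  "Av P Ms = {M. P M \<and> \<not> (\<exists>B\<in>Ms. submat B M)}"

abbreviation Av_S :: "bmat set \<Rightarrow> bmat set" where "Av_S \<equiv> Av is_perm_mat"
abbreviation Av_P :: "bmat set \<Rightarrow> bmat set" where "Av_P \<equiv> Av is_polyomino"

definition Cplus :: "bmat set \<Rightarrow> bmat set" where
  "Cplus C = {M'. \<exists>M\<in>C. submat M' M}"

definition canon_basis :: "(bmat \<Rightarrow> bool) \<Rightarrow> bmat set \<Rightarrow> bmat set" where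
  "canon_basis Q C = {M. Q M \<and> M \<notin> Cplus C \<and>
      (\<forall>M'. submat M' M \<and> M' \<noteq> M \<and> Q M' \<longrightarrow> M' \<in> Cplus C)}"

definition canon_basis_S :: "bmat set \<Rightarrow> bmat set" where
  "canon_basis_S C = canon_basis is_quasi_perm C"

definition canon_basis_P :: "bmat set \<Rightarrow> bmat set" where
  "canon_basis_P C = canon_basis wf_mat C"

definition antichain :: "bmat set \<Rightarrow> bool" where
  "antichain Ms \<longleftrightarrow> (\<forall>A\<in>Ms. \<forall>B\<in>Ms. submat A B \<longrightarrow> A = B)"

definition m_basis :: "(bmat \<Rightarrow> bool) \<Rightarrow> bmat set \<Rightarrow> bmat set \<Rightarrow> bool" where
  "m_basis P C Ms \<longleftrightarrow> (\<forall>M\<in>Ms. wf_mat M) \<and> antichain Ms \<and> C = Av P Ms"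

definition minimal_m_basis :: "(bmat \<Rightarrow> bool) \<Rightarrow> bmat set \<Rightarrow> bmat set \<Rightarrow> bool" where
  "minimal_m_basis P C Ms \<longleftrightarrow> m_basis P C Ms \<and>
     (\<forall>Ms'. Ms' \<subset> Ms \<longrightarrow> C \<noteq> Av P Ms') \<and>
     (\<forall>M\<in>Ms. \<forall>M'. submat M' M \<longrightarrow> M' = M \<or> C \<noteq> Av P ((Ms - {M}) \<union> {M'}))"

end

theory Submission
  imports Defs
begin

lemma smo_inj:
  fixes f :: "nat \<Rightarrow> nat"
  assumes "strict_mono_on {..<k} f" "i < k" "j < k" "f i = f j"
  shows "i = j"
proof (rule ccontr)
  assume "i \<noteq> j"
  then have "i < j \<or> j < i" by (rule linorder_neqE_nat) auto
  then show False using assms unfolding strict_mono_on_def by (metis lessThan_iff order_less_irrefl)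
qed

lemma submat_wf: "submat M' M \<Longrightarrow> wf_mat M'"
  unfolding submat_def wf_mat_def by (auto split: prod.splits)

lemma submat_trans:
  assumes ab: "submat A B" and bc: "submat B C"
  shows "submat A C"
proof -
  obtain ma na SA where A: "A = (ma, na, SA)" by (cases A) auto
  obtain mb nb SB where B: "B = (mb, nb, SB)" by (cases B) auto
  obtain mc nc SC where C: "C = (mc, nc, SC)" by (cases C) auto
  from ab obtain r1 c1 where 1: "strict_mono_on {..<ma} r1" "\<forall>i<ma. r1 i < mb"
     "strict_mono_on {..<na} c1" "\<forall>j<na. c1 j < nb"
     "SA = {(i, j). i < ma \<and> j < na \<and> (r1 i, c1 j) \<in> SB}"
    unfolding submat_def A B by auto
  from bc obtain r2 c2 where 2: "strict_mono_on {..<mb} r2" "\<forall>i<mb. r2 i < mc"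
     "strict_mono_on {..<nb} c2" "\<forall>j<nb. c2 j < nc"
     "SB = {(i, j). i < mb \<and> j < nb \<and> (r2 i, c2 j) \<in> SC}" and wfc: "wf_mat C"
    unfolding submat_def B C by auto
  have r: "strict_mono_on {..<ma} (r2 \<circ> r1)"
    using 1(1,2) 2(1) unfolding strict_mono_on_def by auto
  have c: "strict_mono_on {..<na} (c2 \<circ> c1)"
    using 1(3,4) 2(3) unfolding strict_mono_on_def by auto
  have S: "SA = {(i, j). i < ma \<and> j < na \<and> ((r2 \<circ> r1) i, (c2 \<circ> c1) j) \<in> SC}"
    using 1 2 by auto
  have rb: "\<forall>i<ma. (r2 \<circ> r1) i < mc" using 1(2) 2(2) by simp
  have cb: "\<forall>j<na. (c2 \<circ> c1) j < nc" using 1(4) 2(4) by simp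
  have ex: "\<exists>r c. strict_mono_on {..<ma} r \<and> (\<forall>i<ma. r i < mc) \<and>
              strict_mono_on {..<na} c \<and> (\<forall>j<na. c j < nc) \<and>
              SA = {(i, j). i < ma \<and> j < na \<and> (r i, c j) \<in> SC}"
    by (rule exI[of _ "r2 \<circ> r1"], rule exI[of _ "c2 \<circ> c1"], intro conjI r c S rb cb)
  have wfc': "wf_mat (mc, nc, SC)" using wfc unfolding C .
  show ?thesis unfolding submat_def A C prod.case using wfc' ex by (rule conjI)
qed

lemma quasi_sub:
  assumes q: "is_quasi_perm M" and s: "submat M' M"
  shows "is_quasi_perm M'"
proof -
  obtain m n S where M: "M = (m, n, S)" by (cases M) auto
  obtain m' n' S' where M': "M' = (m', n', S')" by (cases M') auto
  from s obtain r c where 1: "strict_mono_on {..<m'} r" "\<forall>i<m'. r i < m"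
     "strict_mono_on {..<n'} c" "\<forall>j<n'. c j < n"
     "S' = {(i, j). i < m' \<and> j < n' \<and> (r i, c j) \<in> S}"
    unfolding submat_def M M' by auto
  from q have q1: "\<forall>i j j'. (i, j) \<in> S \<longrightarrow> (i, j') \<in> S \<longrightarrow> j = j'"
    and q2: "\<forall>i i' j. (i, j) \<in> S \<longrightarrow> (i', j) \<in> S \<longrightarrow> i = i'"
    unfolding is_quasi_perm_def M by auto
  have "j = j'" if a: "(i, j) \<in> S'" "(i, j') \<in> S'" for i j j'
  proof -
    from a 1(5) have "j < n'" "j' < n'" "(r i, c j) \<in> S" "(r i, c j') \<in> S" by simp_all
    then have "c j = c j'" using q1 by blast
    then show ?thesis by (rule smo_inj[OF 1(3) \<open>j < n'\<close> \<open>j' < n'\<close>])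
  qed
  moreover have "i = i'" if a: "(i, j) \<in> S'" "(i', j) \<in> S'" for i i' j
  proof -
    from a 1(5) have "i < m'" "i' < m'" "(r i, c j) \<in> S" "(r i', c j) \<in> S" by simp_all
    then have "r i = r i'" using q2 by blast
    then show ?thesis by (rule smo_inj[OF 1(1) \<open>i < m'\<close> \<open>i' < m'\<close>])
  qed
  moreover have "wf_mat (m', n', S')" using submat_wf[OF s] unfolding M' .
  ultimately show ?thesis unfolding is_quasi_perm_def M' prod.case by blast
qed

lemma perm_quasi: "is_perm_mat N \<Longrightarrow> is_quasi_perm N"
  unfolding is_perm_mat_def is_quasi_perm_def wf_mat_def
  by (auto simp: bij_betw_def inj_on_def)

lemma canon_D:
  assumes "M \<in> canon_basis Q C"
  shows "Q M" "M \<notin> Cplus C" "\<And>M'. submat M' M \<Longrightarrow> M' \<noteq> M \<Longrightarrow> Q M' \<Longrightarrow> M' \<in> Cplus C"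
  using assms unfolding canon_basis_def mem_Collect_eq by blast+

lemma canon_I:
  assumes "Q M" "M \<notin> Cplus C" "\<And>M'. submat M' M \<Longrightarrow> M' \<noteq> M \<Longrightarrow> Q M' \<Longrightarrow> M' \<in> Cplus C"
  shows "M \<in> canon_basis Q C"
  unfolding canon_basis_def mem_Collect_eq using assms by blast

lemma Av_mem: "N \<in> Av P Ms \<longleftrightarrow> P N \<and> (\<forall>B\<in>Ms. \<not> submat B N)"
  unfolding Av_def by blast

lemma Cplus_mem: "M \<in> Cplus C \<longleftrightarrow> (\<exists>N\<in>C. submat M N)"
  unfolding Cplus_def by blast

lemma general:
  assumes Qwf: "\<And>M. Q M \<Longrightarrow> wf_mat M"
    and PQ: "\<And>M N. P N \<Longrightarrow> submat M N \<Longrightarrow> Q M"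
    and Qsub: "\<And>M M'. Q M \<Longrightarrow> submat M' M \<Longrightarrow> Q M'"
  shows "minimal_m_basis P C B \<longleftrightarrow>
     (B \<subseteq> canon_basis Q C \<and> C = Av P B \<and> (\<forall>B'. B' \<subset> B \<longrightarrow> C \<noteq> Av P B'))"
proof
  assume mb: "minimal_m_basis P C B"
  have mb': "m_basis P C B \<and> (\<forall>B'. B' \<subset> B \<longrightarrow> C \<noteq> Av P B') \<and>
     (\<forall>M\<in>B. \<forall>M'. submat M' M \<longrightarrow> M' = M \<or> C \<noteq> Av P ((B - {M}) \<union> {M'}))"
    using mb unfolding minimal_m_basis_def by assumption
  have CB: "C = Av P B" using conjunct1[OF mb'] unfolding m_basis_def by (elim conjE)
  have min: "\<forall>B'. B' \<subset> B \<longrightarrow> C \<noteq> Av P B'" by (rule conjunct1[OF conjunct2[OF mb']])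
  have cond2: "\<forall>M\<in>B. \<forall>M'. submat M' M \<longrightarrow> M' = M \<or> C \<noteq> Av P ((B - {M}) \<union> {M'})"
    by (rule conjunct2[OF conjunct2[OF mb']])
  have "B \<subseteq> canon_basis Q C"
  proof
    fix M assume MB: "M \<in> B"
    have "B - {M} \<subset> B" using MB by blast
    then have "C \<noteq> Av P (B - {M})" using min by blast
    moreover have "C \<subseteq> Av P (B - {M})" unfolding CB subset_iff Av_mem by blast
    ultimately obtain N where N: "N \<in> Av P (B - {M})" "N \<notin> Av P B"
      using CB by blast
    then have "P N" "submat M N" unfolding Av_mem by blast+
    then have QM: "Q M" by (rule PQ)
    have nC: "M \<notin> Cplus C" using MB unfolding CB Cplus_mem Bex_def Av_mem by blast
    show "M \<in> canon_basis Q C"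
    proof (rule canon_I[where Q=Q and M=M and C=C, OF QM nC])
      fix M' assume s: "submat M' M" and ne: "M' \<noteq> M" and "Q M'"
      show "M' \<in> Cplus C"
      proof (rule ccontr)
        assume nc: "M' \<notin> Cplus C"
        have eq: "Av P ((B - {M}) \<union> {M'}) = Av P B"
        proof
          show "Av P ((B - {M}) \<union> {M'}) \<subseteq> Av P B"
            unfolding subset_iff Av_mem using submat_trans[OF s] by blast
          show "Av P B \<subseteq> Av P ((B - {M}) \<union> {M'})"
            using nc unfolding CB subset_iff Av_mem Cplus_mem Bex_def by blast
        qed
        have "M' = M \<or> C \<noteq> Av P ((B - {M}) \<union> {M'})"
          using cond2 MB s by blast
        then show False using ne eq CB by simp
      qed
    qed
  qed
  then show "B \<subseteq> canon_basis Q C \<and> C = Av P B \<and> (\<forall>B'. B' \<subset> B \<longrightarrow> C \<noteq> Av P B')"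
    using CB min by blast
next
  assume r: "B \<subseteq> canon_basis Q C \<and> C = Av P B \<and> (\<forall>B'. B' \<subset> B \<longrightarrow> C \<noteq> Av P B')"
  then have sub: "B \<subseteq> canon_basis Q C" and CB: "C = Av P B"
    and min: "\<forall>B'. B' \<subset> B \<longrightarrow> C \<noteq> Av P B'" by blast+
  have wf: "\<forall>M\<in>B. wf_mat M"
  proof
    fix M assume "M \<in> B"
    then have "M \<in> canon_basis Q C" using sub by blast
    then show "wf_mat M" by (rule Qwf[OF canon_D(1)])
  qed
  have ac: "antichain B"
    unfolding antichain_def
  proof (intro ballI impI)
    fix A D assume A: "A \<in> B" and D: "D \<in> B" and s: "submat A D"
    show "A = D"
    proof (rule ccontr)
      assume ne: "A \<noteq> D"
      have cA: "A \<in> canon_basis Q C" and cD: "D \<in> canon_basis Q C" using A D sub by blast+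
      have "A \<in> Cplus C" by (rule canon_D(3)[OF cD s ne canon_D(1)[OF cA]])
      then show False using canon_D(2)[OF cA] by blast
    qed
  qed
  have c2: "\<forall>M\<in>B. \<forall>M'. submat M' M \<longrightarrow> M' = M \<or> C \<noteq> Av P ((B - {M}) \<union> {M'})"
  proof (intro ballI allI impI)
    fix M M' assume MB: "M \<in> B" and s: "submat M' M"
    show "M' = M \<or> C \<noteq> Av P ((B - {M}) \<union> {M'})"
    proof (cases "M' = M")
      case False
      have cM: "M \<in> canon_basis Q C" using MB sub by blast
      have "M' \<in> Cplus C" by (rule canon_D(3)[OF cM s False Qsub[OF canon_D(1)[OF cM] s]])
      then obtain N where N: "N \<in> C" "submat M' N" unfolding Cplus_mem by blast
      then have "N \<notin> Av P ((B - {M}) \<union> {M'})" unfolding Av_mem by blast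
      then show ?thesis using N(1) by blast
    next
      case True
      then show ?thesis by blast
    qed
  qed
  have "m_basis P C B" unfolding m_basis_def using wf ac CB by blast
  then show "minimal_m_basis P C B"
    unfolding minimal_m_basis_def using min c2 by blast
qed

lemma perm_quasi_sub: "is_perm_mat N \<Longrightarrow> submat M N \<Longrightarrow> is_quasi_perm M"
  by (rule quasi_sub[OF perm_quasi])

lemma quasi_wf: "is_quasi_perm M \<Longrightarrow> wf_mat M"
  unfolding is_quasi_perm_def by (elim conjE)

theorem proposition5:
  shows "(\<forall>C. perm_class C \<longrightarrow> (\<forall>B. minimal_m_basis is_perm_mat C B \<longleftrightarrow>
            (B \<subseteq> canon_basis_S C \<and> C = Av_S B \<and> (\<forall>B'. B' \<subset> B \<longrightarrow> C \<noteq> Av_S B')))) \<and>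
         (\<forall>C. polyomino_class C \<longrightarrow> (\<forall>B. minimal_m_basis is_polyomino C B \<longleftrightarrow>
            (B \<subseteq> canon_basis_P C \<and> C = Av_P B \<and> (\<forall>B'. B' \<subset> B \<longrightarrow> C \<noteq> Av_P B'))))"
proof -
  have S: "minimal_m_basis is_perm_mat C B \<longleftrightarrow>
            (B \<subseteq> canon_basis_S C \<and> C = Av_S B \<and> (\<forall>B'. B' \<subset> B \<longrightarrow> C \<noteq> Av_S B'))" for C B
    unfolding canon_basis_S_def
    by (rule general[OF quasi_wf perm_quasi_sub quasi_sub])
  have P: "minimal_m_basis is_polyomino C B \<longleftrightarrow>
            (B \<subseteq> canon_basis_P C \<and> C = Av_P B \<and> (\<forall>B'. B' \<subset> B \<longrightarrow> C \<noteq> Av_P B'))" for C B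
    unfolding canon_basis_P_def
    by (rule general[where Q=wf_mat]) (assumption, erule submat_wf, erule submat_wf)
  show ?thesis
    by (intro conjI allI impI S P)
qed

end
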